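(* Let $q:\mathsf D\to\mathbb R$ have sensitivity $\Delta q\in(0,\infty)$, and let $\Lambda$ be a random variable with support in $(0,\infty)$, $\mathbb E[\Lambda]<\infty$, MGF $M_\Lambda$, and $M_\Lambda(\Delta q)<\infty$. Let $\epsilon_R=\ln[\mathbb E(\Lambda)/M'_\Lambda(-\Delta q)]$ be the privacy level of the Randomized DP Laplace mechanism with reciprocal scale $\Lambda$. If $\epsilon_R\ge \ln \mathbb E\big[e^{\Delta q\,\Lambda}\big]=\ln M_\Lambda(\Delta q)$, then for every $\gamma>0$ the usefulness of this mechanism is at most that of the baseline Laplace mechanism with the same privacy level, i.e. $$\mathbb P(|\mathcal M_q(d)-q(d)|\le\gamma)\le 1-e^{-\epsilon_R\gamma/\Delta q}.$$ Equivalently, a necessary condition for the Randomized DP Laplace mechanism to have strictly larger usefulness than the $\epsilon_R$-DP baseline Laplace mechanism for some $\gamma>0$ is $$e^{\epsilon_R}=\frac{\mathbb E(\Lambda)}{M'_\Lambda(-\Delta q)}<M_\Lambda(\Delta q).$$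
   Context: Databases form a set $\mathsf D$ with a symmetric adjacency relation; the sensitivity of $q$ is $\Delta q=\sup\{|q(d)-q(d')|:d,d'\text{ adjacent}\}$. The baseline $\epsilon$-DP Laplace mechanism outputs $q(d)+Z$ with $Z$ Laplace of mean $0$ and scale $\Delta q/\epsilon$, so its usefulness at level $\gamma$ is $\mathbb P(|Z|\le\gamma)=1-e^{-\epsilon\gamma/\Delta q}$. The Randomized DP Laplace mechanism with reciprocal-scale distribution $\Lambda$ (a random variable with values in $(0,\infty)$, playing the role of $1/b$ for the Laplace scale $b$) is defined by $\mathcal M_q(d)=q(d)+W$, where conditionally on $\Lambda=\lambda$ the noise $W$ is Laplace with mean $0$ and scale $1/\lambda$, i.e. has density $\frac{\lambda}{2}e^{-\lambda|w|}$; the pair $(\Lambda,W)$ is drawn independently of $d$. $M_\Lambda(t)=\mathbb E[e^{t\Lambda}]$ and $M'_\Lambda(t)=\mathbb E[\Lambda e^{t\Lambda}]$. *)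

theory Defs
  imports "HOL-Probability.Probability"
begin

definition sensitivity :: "('d \<Rightarrow> 'd \<Rightarrow> bool) \<Rightarrow> ('d \<Rightarrow> real) \<Rightarrow> real" where
  "sensitivity adj q = Sup {\<bar>q d - q d'\<bar> | d d'. adj d d'}"

definition mgf :: "real measure \<Rightarrow> real \<Rightarrow> real" where
  "mgf L t = (\<integral>x. exp (t * x) \<partial>L)"

definition mgf' :: "real measure \<Rightarrow> real \<Rightarrow> real" where
  "mgf' L t = (\<integral>x. x * exp (t * x) \<partial>L)"

definition laplace_density :: "real \<Rightarrow> real \<Rightarrow> real" where
  "laplace_density l w = l / 2 * exp (- l * \<bar>w\<bar>)"

definition rdp_noise :: "real measure \<Rightarrow> real measure" where
  "rdp_noise L = L \<bind> (\<lambda>l. density lborel (\<lambda>w. ennreal (laplace_density l w)))"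

definition rdp_laplace_mech :: "real measure \<Rightarrow> ('d \<Rightarrow> real) \<Rightarrow> 'd \<Rightarrow> real measure" where
  "rdp_laplace_mech L q d = distr (rdp_noise L) borel (\<lambda>w. q d + w)"

definition eps_R :: "real measure \<Rightarrow> real \<Rightarrow> real" where
  "eps_R L \<Delta> = ln ((\<integral>x. x \<partial>L) / mgf' L (- \<Delta>))"

end

theory Submission imports Defs begin

lemma lap_has_int:
  assumes l: "l > 0" and t: "t \<ge> 0"
  shows "(laplace_density l has_integral (1 - exp (-l*t))) {-t..t}"
proof -
  have A0: "((\<lambda>w. l/2 * exp (-l*w)) has_integral ((-1/2*exp(-l*t)) - (-1/2*exp(-l*0)))) {0..t}"
    by (rule fundamental_theorem_of_calculus[OF t])
       (auto intro!: derivative_eq_intros simp: has_real_derivative_iff_has_vector_derivative[symmetric])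
  have A: "((\<lambda>w. l/2 * exp (-l*w)) has_integral (1/2 - 1/2*exp(-l*t))) {0..t}"
    using A0 by simp
  have B0: "((\<lambda>w. l/2 * exp (l*w)) has_integral ((1/2*exp(l*0)) - (1/2*exp(l*(-t))))) {-t..0}"
    by (rule fundamental_theorem_of_calculus) (use t in \<open>auto intro!: derivative_eq_intros simp: has_real_derivative_iff_has_vector_derivative[symmetric]\<close>)
  have B: "((\<lambda>w. l/2 * exp (l*w)) has_integral (1/2 - 1/2*exp(-l*t))) {-t..0}"
    using B0 by simp
  have A': "(laplace_density l has_integral (1/2 - 1/2*exp(-l*t))) {0..t}"
    using A by (rule has_integral_eq[rotated]) (auto simp: laplace_density_def)
  have B': "(laplace_density l has_integral (1/2 - 1/2*exp(-l*t))) {-t..0}"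
    using B by (rule has_integral_eq[rotated]) (auto simp: laplace_density_def)
  show ?thesis using has_integral_combine[OF _ _ B' A'] t by simp
qed

abbreviation K :: "real \<Rightarrow> real measure" where
  "K l \<equiv> density lborel (\<lambda>w. ennreal (laplace_density l w))"

lemma lap_meas[measurable]: "(\<lambda>(l,w). laplace_density l w) \<in> borel_measurable (borel \<Otimes>\<^sub>M borel)"
  unfolding laplace_density_def by measurable

lemma lap_meas2[measurable]: "laplace_density l \<in> borel_measurable borel"
  unfolding laplace_density_def by measurable

lemma lap_emeasure:
  assumes l: "l > 0" and t: "t \<ge> 0"
  shows "emeasure (K l) {-t..t} = ennreal (1 - exp (-l*t))"
proof -
  have "emeasure (K l) {-t..t} = (\<integral>\<^sup>+ w. ennreal (laplace_density l w) * indicator {-t..t} w \<partial>lborel)"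
    by (rule emeasure_density) auto
  also have "\<dots> = ennreal (1 - exp (-l*t))"
    by (rule nn_integral_has_integral_lebesgue'[OF _ lap_has_int[OF l t]])
       (use l in \<open>auto simp: laplace_density_def\<close>)
  finally show ?thesis .
qed

lemma lap_emeasure_nonpos:
  assumes l: "l \<le> 0" and A: "A \<in> sets borel"
  shows "emeasure (K l) A = 0"
proof -
  have "emeasure (K l) A = (\<integral>\<^sup>+ w. ennreal (laplace_density l w) * indicator A w \<partial>lborel)"
    by (rule emeasure_density) (use A in auto)
  also have "\<dots> = (\<integral>\<^sup>+ w. 0 \<partial>lborel)"
  proof -
    have "ennreal (laplace_density l w) = 0" for w
    proof -
      have "laplace_density l w \<le> 0" using l by (simp add: laplace_density_def mult_nonpos_nonneg)
      then show ?thesis by (simp add: ennreal_neg)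
    qed
    then show ?thesis by simp
  qed
  finally show ?thesis by simp
qed

lemma K_subprob: "subprob_space (K l)"
proof (rule subprob_spaceI)
  show "space (K l) \<noteq> {}" by simp
  show "emeasure (K l) (space (K l)) \<le> 1"
  proof (cases "l > 0")
    case True
    have U: "space (K l) = (\<Union>n. {-real n..real n})"
    proof (safe)
      fix x :: real
      obtain n where "\<bar>x\<bar> \<le> real n" using real_arch_simple by blast
      then show "x \<in> (\<Union>n. {-real n..real n})" by (auto simp: abs_le_iff intro!: exI[of _ n])
    qed auto
    have "emeasure (K l) (\<Union>n. {-real n..real n}) = (SUP n. emeasure (K l) {-real n..real n})"
      by (rule SUP_emeasure_incseq[symmetric]) (auto simp: incseq_def)
    also have "\<dots> \<le> 1"
      using True by (intro SUP_least) (simp add: lap_emeasure)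
    finally show ?thesis using U by simp
  next
    case False
    then show ?thesis by (simp add: lap_emeasure_nonpos)
  qed
qed

lemma K_meas:
  assumes "sets L = sets borel"
  shows "K \<in> measurable L (subprob_algebra lborel)"
proof (rule measurable_subprob_algebra)
  show "subprob_space (K a)" for a by (rule K_subprob)
  show "sets (K a) = sets lborel" for a by simp
  fix A :: "real set" assume A: "A \<in> sets lborel"
  have "(\<lambda>a. emeasure (K a) A) = (\<lambda>a. \<integral>\<^sup>+ w. ennreal (laplace_density a w) * indicator A w \<partial>lborel)"
    using A by (intro ext emeasure_density) auto
  also have "\<dots> \<in> borel_measurable borel"
    using A by measurable
  finally show "(\<lambda>a. emeasure (K a) A) \<in> borel_measurable L"
    by (subst measurable_cong_sets[OF assms refl])
qed

theorem mainTheorem6: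
  fixes adj :: "'d \<Rightarrow> 'd \<Rightarrow> bool" and q :: "'d \<Rightarrow> real" and L :: "real measure"
    and \<gamma> :: real and d :: 'd
  assumes adj_sym: "symp adj"
    and adj_ne: "\<exists>d d'. adj d d'"
    and sens_bdd: "bdd_above {\<bar>q d - q d'\<bar> | d d'. adj d d'}"
    and sens_pos: "sensitivity adj q > 0"
    and L_prob: "prob_space L"
    and L_sets: "sets L = sets borel"
    and L_pos: "AE x in L. 0 < x"
    and L_mean: "integrable L (\<lambda>x. x)"
    and L_mgf: "integrable L (\<lambda>x. exp (sensitivity adj q * x))"
    and cond: "eps_R L (sensitivity adj q) \<ge> ln (mgf L (sensitivity adj q))"
    and \<gamma>_pos: "\<gamma> > 0"
  shows "measure (rdp_laplace_mech L q d) {y. \<bar>y - q d\<bar> \<le> \<gamma>}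
           \<le> 1 - exp (- eps_R L (sensitivity adj q) * \<gamma> / sensitivity adj q)"
proof -
  define s where "s = sensitivity adj q"
  define e where "e = eps_R L s"
  define m where "m = (\<integral>x. x \<partial>L)"
  define N where "N = rdp_noise L"
  have s_pos: "s > 0" using sens_pos s_def by simp
  interpret P: prob_space L by (rule L_prob)
  have neL: "space L \<noteq> {}" by (rule P.not_empty)
  have Km: "K \<in> measurable L (subprob_algebra lborel)" by (rule K_meas[OF L_sets])
  have N_eq: "N = L \<bind> K" unfolding N_def rdp_noise_def by simp
  have setsN: "sets N = sets borel" unfolding N_eq by (subst sets_bind[OF _ neL]) auto
  have spaceN: "space N = UNIV" using sets_eq_imp_space_eq[OF setsN] by simp
  have set_eq: "{y. \<bar>y - q d\<bar> \<le> \<gamma>} = {q d - \<gamma> .. q d + \<gamma>}" by (auto simp: abs_le_iff)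
  have fm: "(\<lambda>w. q d + w) \<in> measurable N borel"
    by (subst measurable_cong_sets[OF setsN refl]) simp
  have "measure (rdp_laplace_mech L q d) {y. \<bar>y - q d\<bar> \<le> \<gamma>}
      = measure N ((\<lambda>w. q d + w) -` {q d - \<gamma> .. q d + \<gamma>} \<inter> space N)"
    unfolding rdp_laplace_mech_def N_def[symmetric] set_eq
    by (rule measure_distr[OF fm]) simp
  also have "(\<lambda>w. q d + w) -` {q d - \<gamma> .. q d + \<gamma>} \<inter> space N = {-\<gamma>..\<gamma>}"
    using spaceN by auto
  finally have meq: "measure (rdp_laplace_mech L q d) {y. \<bar>y - q d\<bar> \<le> \<gamma>} = measure N {-\<gamma>..\<gamma>}" .
  have expm: "(\<lambda>x. exp (c * x)) \<in> borel_measurable L" for c :: real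
    by (subst measurable_cong_sets[OF L_sets refl]) simp
  have int_g: "integrable L (\<lambda>x. exp (-\<gamma> * x))"
  proof (rule P.integrable_const_bound[where B=1])
    show "AE x in L. norm (exp (-\<gamma> * x)) \<le> 1"
      using L_pos by eventually_elim (use \<gamma>_pos in simp)
  qed (rule expm)
  have int_1g: "integrable L (\<lambda>x. 1 - exp (-\<gamma> * x))"
    using int_g by simp
  have "emeasure N {-\<gamma>..\<gamma>} = (\<integral>\<^sup>+ l. emeasure (K l) {-\<gamma>..\<gamma>} \<partial>L)"
    unfolding N_eq by (rule emeasure_bind[OF neL Km]) simp
  also have "\<dots> = (\<integral>\<^sup>+ l. ennreal (1 - exp (-\<gamma> * l)) \<partial>L)"
    by (rule nn_integral_cong_AE) (use L_pos \<gamma>_pos in \<open>auto simp: lap_emeasure mult.commute\<close>)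
  also have "\<dots> = ennreal (\<integral> l. (1 - exp (-\<gamma> * l)) \<partial>L)"
    by (rule nn_integral_eq_integral[OF int_1g])
       (use L_pos \<gamma>_pos in \<open>auto elim!: eventually_mono\<close>)
  finally have em: "emeasure N {-\<gamma>..\<gamma>} = ennreal (\<integral> l. (1 - exp (-\<gamma> * l)) \<partial>L)" .
  have intval: "(\<integral> l. (1 - exp (-\<gamma> * l)) \<partial>L) = 1 - (\<integral> l. exp (-\<gamma> * l) \<partial>L)"
    using int_g by (simp add: Bochner_Integration.integral_diff P.prob_space)
  have nonneg: "0 \<le> (\<integral> l. (1 - exp (-\<gamma> * l)) \<partial>L)"
    by (rule integral_nonneg_AE) (use L_pos \<gamma>_pos in \<open>auto elim!: eventually_mono\<close>)
  have mN: "measure N {-\<gamma>..\<gamma>} = 1 - (\<integral> l. exp (-\<gamma> * l) \<partial>L)"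
    using em nonneg intval by (simp add: measure_def)
  have J: "exp (c * m) \<le> (\<integral>x. exp (c * x) \<partial>L)" if ic: "integrable L (\<lambda>x. exp (c * x))" for c
  proof -
    have "exp (\<integral>x. c * x \<partial>L) \<le> (\<integral>x. exp (c * x) \<partial>L)"
      by (rule P.jensens_inequality[where I=UNIV and q=exp])
         (use L_mean ic exp_convex in auto)
    then show ?thesis by (simp add: m_def)
  qed
  have J1: "exp (-\<gamma> * m) \<le> (\<integral>x. exp (-\<gamma> * x) \<partial>L)" by (rule J[OF int_g])
  have J2: "exp (s * m) \<le> mgf L s" unfolding mgf_def by (rule J) (use L_mgf s_def in simp)
  have "s * m \<le> ln (mgf L s)"
    using J2 by (subst ln_ge_iff) (auto intro: less_le_trans[OF exp_gt_zero])
  also have "\<dots> \<le> e" using cond unfolding e_def s_def by simp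
  finally have sm: "s * m \<le> e" .
  have "- e * \<gamma> / s \<le> -\<gamma> * m"
  proof -
    have "m \<le> e / s" using sm s_pos by (simp add: field_simps)
    then have "\<gamma> * m \<le> \<gamma> * (e / s)" using \<gamma>_pos by (intro mult_left_mono) auto
    then show ?thesis by (simp add: field_simps)
  qed
  then have "exp (- e * \<gamma> / s) \<le> (\<integral>x. exp (-\<gamma> * x) \<partial>L)"
    using J1 by (meson exp_le_cancel_iff order_trans)
  then show ?thesis using meq mN unfolding e_def s_def by simp
qed

end
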